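(* Let $\mathcal P$, $\mathcal J$, $\mathcal P_0$ and $\pi$ be as in the context, with $d$-dimensional Minkowski space, $d>2$. Let $\sigma:\mathcal P_0\to\mathcal P$ be a section satisfying: (i) $\pi\circ\sigma=\mathrm{id}$; (ii) $\sigma$ is an algebra homomorphism; (iii) $\sigma\pi$ commutes with Lorentz transformations; (iv) $\sigma\pi(\mathcal P_1)\subset\mathcal P_1$; (v) $\sigma\pi$ does not increase mass dimension. Then $\sigma\pi(\varphi)=\varphi$, $\sigma\pi(\partial^\mu\varphi)=\partial^\mu\varphi$, and $$\sigma\pi(\partial^\mu\partial^\nu\varphi)=\partial^\mu\partial^\nu\varphi-\frac{1}{d}g^{\mu\nu}(\square+m^2)\varphi.$$
   Context: Let $\varphi$ be a real scalar field of mass $m$ on $d$-dimensional Minkowski space with metric $g^{\mu\nu}$. $\mathcal P$ is the free commutative algebra generated by the symbols $\partial^a\varphi$, $a\in\mathbb N_0^d$, with derivatives $\partial^\mu$ acting as derivations. $\mathcal J=\{\sum_aA_a\,\partial^a(\square+m^2)\varphi:\ A_a\in\mathcal P\}$ is the ideal generated by the free field equation. $\mathcal P_0=\mathcal P/\mathcal J$, $\pi:\mathcal P\to\mathcal P_0$ is the canonical surjection, and $\partial^\mu\pi(B):=\pi(\partial^\mu B)$. $\mathcal P_1\subset\mathcal P$ is the subspace of fields linear in the $\partial^a\varphi$. The mass dimension of $\partial^a\varphi$ is $(d-2)/2+|a|$, extended additively to monomials. Lorentz transformations act on $\mathcal P$ through the tensor indices of the derivatives. *)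

theory Defs
  imports "HOL-Analysis.Analysis" "HOL-Library.Poly_Mapping" "HOL-Algebra.QuotRing"
begin

text \<open>Spacetime indices range over a finite type 'd, with d = CARD('d).
  A multi-index a in N_0^d is a function 'd => nat (a mu = number of derivatives d^mu).
  A monomial in the symbols d^a phi is a finitely supported map (multi-index => exponent);
  a field (element of P) is a finitely supported map (monomial => real coefficient).\<close>

type_synonym 'd mi = "'d \<Rightarrow> nat"
type_synonym 'd mon = "'d mi \<Rightarrow>\<^sub>0 nat"
type_synonym 'd fld = "'d mon \<Rightarrow>\<^sub>0 real"

definition dphi :: "'d mi \<Rightarrow> 'd fld" where
  "dphi a = Poly_Mapping.single (Poly_Mapping.single a 1) 1"

definition mi0 :: "'d mi" where "mi0 = (\<lambda>_. 0)"

definition emi :: "'d \<Rightarrow> 'd mi" where "emi \<mu> = (\<lambda>\<nu>. if \<nu> = \<mu> then 1 else 0)"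

definition miadd :: "'d mi \<Rightarrow> 'd mi \<Rightarrow> 'd mi" where "miadd a b = (\<lambda>\<nu>. a \<nu> + b \<nu>)"

definition smult :: "real \<Rightarrow> ('a \<Rightarrow>\<^sub>0 real) \<Rightarrow> ('a \<Rightarrow>\<^sub>0 real)" where
  "smult c p = Poly_Mapping.map (\<lambda>x. c * x) p"

definition monom1 :: "('v \<Rightarrow>\<^sub>0 nat) \<Rightarrow> (('v \<Rightarrow>\<^sub>0 nat) \<Rightarrow>\<^sub>0 real)" where
  "monom1 n = Poly_Mapping.single n 1"

definition subst :: "('v \<Rightarrow> 'w fld) \<Rightarrow> (('v \<Rightarrow>\<^sub>0 nat) \<Rightarrow>\<^sub>0 real) \<Rightarrow> 'w fld" where
  "subst f p = (\<Sum>n\<in>Poly_Mapping.keys p.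
      smult (Poly_Mapping.lookup p n) (\<Prod>v\<in>Poly_Mapping.keys n. f v ^ Poly_Mapping.lookup n v))"

text \<open>The unique (real-linear) derivation of P sending the generator d^a phi to f a.\<close>
definition derivation :: "('d mi \<Rightarrow> 'd fld) \<Rightarrow> 'd fld \<Rightarrow> 'd fld" where
  "derivation f p = (\<Sum>n\<in>Poly_Mapping.keys p. smult (Poly_Mapping.lookup p n)
      (\<Sum>v\<in>Poly_Mapping.keys n. smult (real (Poly_Mapping.lookup n v))
          (monom1 (n - Poly_Mapping.single v 1) * f v)))"

definition pd :: "'d \<Rightarrow> 'd fld \<Rightarrow> 'd fld" where
  "pd \<mu> = derivation (\<lambda>a. dphi (miadd a (emi \<mu>)))"

text \<open>Minkowski metric g^{mu nu} = diag(+1,-1,...,-1), the time direction being t :: 'd.\<close>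
definition mink :: "'d \<Rightarrow> 'd \<Rightarrow> 'd \<Rightarrow> real" where
  "mink t \<mu> \<nu> = (if \<mu> \<noteq> \<nu> then 0 else if \<mu> = t then 1 else -1)"

definition KG :: "'d \<Rightarrow> real \<Rightarrow> 'd fld" where
  "KG t m = (\<Sum>\<mu>\<in>UNIV. \<Sum>\<nu>\<in>UNIV. smult (mink t \<mu> \<nu>) (pd \<mu> (pd \<nu> (dphi mi0))))
            + smult (m ^ 2) (dphi mi0)"

inductive_set KGders :: "'d \<Rightarrow> real \<Rightarrow> 'd fld set" for t m where
  base: "KG t m \<in> KGders t m"
| step: "p \<in> KGders t m \<Longrightarrow> pd \<mu> p \<in> KGders t m"

definition PR :: "'d fld ring" where
  "PR = \<lparr>carrier = UNIV, monoid.mult = (*), one = 1, zero = 0, add = (+)\<rparr>"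

definition Jid :: "'d \<Rightarrow> real \<Rightarrow> 'd fld set" where
  "Jid t m = genideal PR (KGders t m)"

definition P0 :: "'d \<Rightarrow> real \<Rightarrow> 'd fld set ring" where
  "P0 t m = PR Quot (Jid t m)"

definition proj :: "'d \<Rightarrow> real \<Rightarrow> 'd fld \<Rightarrow> 'd fld set" where
  "proj t m p = Jid t m +>\<^bsub>PR\<^esub> p"

definition P1 :: "'d fld set" where
  "P1 = {p. \<forall>n\<in>Poly_Mapping.keys p. \<exists>a. n = Poly_Mapping.single a 1}"

definition mdim_mi :: "'d mi \<Rightarrow> real" where
  "mdim_mi a = (real CARD('d) - 2) / 2 + real (\<Sum>\<mu>\<in>UNIV. a \<mu>)"

definition mdim :: "'d mon \<Rightarrow> real" where
  "mdim n = (\<Sum>a\<in>Poly_Mapping.keys n. real (Poly_Mapping.lookup n a) * mdim_mi a)"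

definition lorentz :: "'d::finite \<Rightarrow> (real^'d^'d) set" where
  "lorentz t = {L. (\<forall>\<mu> \<nu>. (\<Sum>\<rho>\<in>UNIV. L $ \<rho> $ \<mu> * mink t \<rho> \<rho> * L $ \<rho> $ \<nu>) = mink t \<mu> \<nu>)
                   \<and> det L = 1 \<and> L $ t $ t \<ge> 1}"

text \<open>Image of d^a phi: d^{mu_1}...d^{mu_k} phi |-> L^{mu_1}_{nu_1}...L^{mu_k}_{nu_k} d^{nu_1}...d^{nu_k} phi,
  computed in the commutative polynomial ring in the formal symbols d^nu (variables 'd).\<close>
definition lgen_sym :: "real^'d^'d \<Rightarrow> 'd mi \<Rightarrow> (('d \<Rightarrow>\<^sub>0 nat) \<Rightarrow>\<^sub>0 real)" where
  "lgen_sym L a = (\<Prod>\<mu>\<in>UNIV. (\<Sum>\<nu>\<in>UNIV. smult (L $ \<mu> $ \<nu>) (monom1 (Poly_Mapping.single \<nu> 1))) ^ a \<mu>)"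

definition sym_to_field :: "(('d \<Rightarrow>\<^sub>0 nat) \<Rightarrow>\<^sub>0 real) \<Rightarrow> 'd fld" where
  "sym_to_field q = (\<Sum>b\<in>Poly_Mapping.keys q. smult (Poly_Mapping.lookup q b) (dphi (Poly_Mapping.lookup b)))"

definition lact :: "real^'d^'d \<Rightarrow> 'd fld \<Rightarrow> 'd fld" where
  "lact L = subst (\<lambda>a. sym_to_field (lgen_sym L a))"

end

theory Submission
  imports Defs
begin

definition CR :: "'a::comm_ring_1 ring" where
  "CR = \<lparr>carrier = UNIV, monoid.mult = (*), one = 1, zero = 0, add = (+)\<rparr>"
lemma cring_CR: "cring (CR :: 'a::comm_ring_1 ring)"
proof (rule cringI)
  show "abelian_group (CR :: 'a ring)"
    by (rule abelian_groupI) (auto simp: CR_def algebra_simps intro: exI[of _ "- _"])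
  show "comm_monoid (CR :: 'a ring)"
    by (rule comm_monoidI) (auto simp: CR_def algebra_simps)
qed (auto simp: CR_def algebra_simps)
lemma PR_CR: "PR = CR" by (simp add: PR_def CR_def)

lemma pm_expand: "p = (\<Sum>n\<in>Poly_Mapping.keys p. Poly_Mapping.single n (Poly_Mapping.lookup p n))"
proof (rule poly_mapping_eqI)
  fix k
  show "Poly_Mapping.lookup p k = Poly_Mapping.lookup (\<Sum>n\<in>Poly_Mapping.keys p. Poly_Mapping.single n (Poly_Mapping.lookup p n)) k"
    by (simp add: lookup_sum lookup_single when_def in_keys_iff)
qed

lemma sum_keys_sup:
  assumes "finite K" "Poly_Mapping.keys p \<subseteq> K" "\<And>n. F n 0 = 0"
  shows "(\<Sum>n\<in>Poly_Mapping.keys p. F n (Poly_Mapping.lookup p n)) = (\<Sum>n\<in>K. F n (Poly_Mapping.lookup p n))"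
  by (rule sum.mono_neutral_left) (use assms in \<open>auto simp: in_keys_iff\<close>)

lemma sum_keys_add:
  fixes F :: "'a \<Rightarrow> 'b::comm_monoid_add \<Rightarrow> 'c::comm_monoid_add"
  assumes "\<And>n. F n 0 = 0" "\<And>n x y. F n (x + y) = F n x + F n y"
  shows "(\<Sum>n\<in>Poly_Mapping.keys (p+q). F n (Poly_Mapping.lookup (p+q) n)) =
    (\<Sum>n\<in>Poly_Mapping.keys p. F n (Poly_Mapping.lookup p n)) + (\<Sum>n\<in>Poly_Mapping.keys q. F n (Poly_Mapping.lookup q n))"
proof -
  let ?K = "Poly_Mapping.keys p \<union> Poly_Mapping.keys q"
  have "(\<Sum>n\<in>Poly_Mapping.keys (p+q). F n (Poly_Mapping.lookup (p+q) n)) = (\<Sum>n\<in>?K. F n (Poly_Mapping.lookup (p+q) n))"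
    by (rule sum_keys_sup) (use assms keys_add[of p q] in auto)
  also have "\<dots> = (\<Sum>n\<in>?K. F n (Poly_Mapping.lookup p n)) + (\<Sum>n\<in>?K. F n (Poly_Mapping.lookup q n))"
    by (simp add: lookup_add assms sum.distrib)
  also have "\<dots> = (\<Sum>n\<in>Poly_Mapping.keys p. F n (Poly_Mapping.lookup p n)) + (\<Sum>n\<in>Poly_Mapping.keys q. F n (Poly_Mapping.lookup q n))"
    by (subst (1 2) sum_keys_sup[symmetric]) (use assms in auto)
  finally show ?thesis .
qed

lemma sum_keys_single:
  assumes "\<And>n. F n 0 = 0"
  shows "(\<Sum>n\<in>Poly_Mapping.keys (Poly_Mapping.single m c). F n (Poly_Mapping.lookup (Poly_Mapping.single m c) n)) = F m c"
  using assms by (cases "c = 0") auto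

definition kpow :: "('d::finite \<Rightarrow> real) \<Rightarrow> 'd mi \<Rightarrow> real" where
  "kpow k a = (\<Prod>\<mu>\<in>UNIV. k \<mu> ^ a \<mu>)"
definition wt :: "('d::finite \<Rightarrow> real) \<Rightarrow> 'd mon \<Rightarrow> real" where
  "wt k n = (\<Prod>a\<in>Poly_Mapping.keys n. kpow k a ^ Poly_Mapping.lookup n a)"
definition ev :: "('d::finite \<Rightarrow> real) \<Rightarrow> 'd fld \<Rightarrow> real" where
  "ev k p = (\<Sum>n\<in>Poly_Mapping.keys p. Poly_Mapping.lookup p n * wt k n)"

lemma wt_sup: "finite K \<Longrightarrow> Poly_Mapping.keys n \<subseteq> K \<Longrightarrow> wt k n = (\<Prod>a\<in>K. kpow k a ^ Poly_Mapping.lookup n a)"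
  unfolding wt_def by (rule prod.mono_neutral_left) (auto simp: in_keys_iff)

lemma wt_add: "wt k (n + m) = wt k n * wt k m"
proof -
  let ?K = "Poly_Mapping.keys n \<union> Poly_Mapping.keys m"
  have "wt k (n + m) = (\<Prod>a\<in>?K. kpow k a ^ Poly_Mapping.lookup (n+m) a)"
    by (rule wt_sup) (use keys_add[of n m] in auto)
  also have "\<dots> = (\<Prod>a\<in>?K. kpow k a ^ Poly_Mapping.lookup n a) * (\<Prod>a\<in>?K. kpow k a ^ Poly_Mapping.lookup m a)"
    by (simp add: lookup_add power_add prod.distrib)
  also have "\<dots> = wt k n * wt k m" by (simp add: wt_sup[of ?K n k] wt_sup[of ?K m k])
  finally show ?thesis .
qed

lemma wt_zero[simp]: "wt k 0 = 1" by (simp add: wt_def)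

lemma ev_add: "ev k (p + q) = ev k p + ev k q"
  unfolding ev_def by (rule sum_keys_add) (auto simp: algebra_simps)

lemma ev_zero[simp]: "ev k 0 = 0" by (simp add: ev_def)

lemma ev_single[simp]: "ev k (Poly_Mapping.single n c) = c * wt k n"
  unfolding ev_def by (rule sum_keys_single) auto

lemma ev_sum: "ev k (\<Sum>i\<in>I. f i) = (\<Sum>i\<in>I. ev k (f i))"
  by (induction I rule: infinite_finite_induct) (auto simp: ev_add)

lemma ev_uminus: "ev k (- p) = - ev k p"
  using ev_add[of k p "-p"] by simp

lemma ev_diff: "ev k (p - q) = ev k p - ev k q"
  using ev_add[of k p "-q"] by (simp add: ev_uminus)

lemma ev_mult: "ev k (p * q) = ev k p * ev k q"
proof -
  have "p * q = (\<Sum>n\<in>Poly_Mapping.keys p. Poly_Mapping.single n (Poly_Mapping.lookup p n)) *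
     (\<Sum>m\<in>Poly_Mapping.keys q. Poly_Mapping.single m (Poly_Mapping.lookup q m))"
    by (subst (1) pm_expand, subst (1) pm_expand[of q]) (rule refl)
  also have "\<dots> = (\<Sum>n\<in>Poly_Mapping.keys p. \<Sum>m\<in>Poly_Mapping.keys q.
       Poly_Mapping.single (n + m) (Poly_Mapping.lookup p n * Poly_Mapping.lookup q m))"
    by (simp add: sum_product mult_single)
  finally have "ev k (p * q) = (\<Sum>n\<in>Poly_Mapping.keys p. \<Sum>m\<in>Poly_Mapping.keys q.
       (Poly_Mapping.lookup p n * Poly_Mapping.lookup q m) * wt k (n + m))"
    by (simp add: ev_sum)
  also have "\<dots> = ev k p * ev k q"
    by (simp add: ev_def wt_add sum_product algebra_simps)
  finally show ?thesis .
qed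

lemma ev_one: "ev k 1 = 1"
  by (metis ev_single mult_1 single_one wt_zero)

lemma ev_hom: "ev k \<in> ring_hom PR CR"
  by (rule ring_hom_memI) (auto simp: PR_def CR_def ev_add ev_mult ev_one)

lemma ev_ker_ideal: "ideal {p. ev k p = 0} PR"
proof -
  interpret R: cring PR using cring_CR PR_CR by metis
  interpret S: cring "CR :: real ring" using cring_CR by metis
  have "ring_hom_ring PR CR (ev k)"
    by (rule ring_hom_ringI2) (auto simp: ev_hom R.ring_axioms S.ring_axioms)
  from ring_hom_ring.kernel_is_ideal[OF this] show ?thesis
    by (simp add: a_kernel_def' PR_def CR_def)
qed

lemma sm_conv: "smult c p = Poly_Mapping.single 0 c * p"
  unfolding smult_def by (rule mult_map_scale_conv_mult)

lemma J_ideal: "ideal (Jid t m) PR"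
proof -
  interpret R: cring PR using cring_CR PR_CR by metis
  show ?thesis unfolding Jid_def by (rule R.genideal_ideal) (simp add: PR_def)
qed

lemma KGders_J: "KGders t m \<subseteq> Jid t m"
proof -
  interpret R: cring PR using cring_CR PR_CR by metis
  show ?thesis unfolding Jid_def by (rule R.genideal_self) (simp add: PR_def)
qed

lemma J_sub_ker:
  assumes "\<And>p. p \<in> KGders t m \<Longrightarrow> ev k p = 0"
  shows "p \<in> Jid t m \<Longrightarrow> ev k p = 0"
proof -
  interpret R: cring PR using cring_CR PR_CR by metis
  have "Jid t m \<subseteq> {p. ev k p = 0}" unfolding Jid_def
    by (rule R.genideal_minimal) (use ev_ker_ideal assms in auto)
  then show "p \<in> Jid t m \<Longrightarrow> ev k p = 0" by auto
qed

lemma proj_eq_diff: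
  assumes "proj t m a = proj t m b" shows "a - b \<in> Jid t m"
proof -
  interpret I: ideal "Jid t m" PR by (rule J_ideal)
  have "a \<in> Jid t m +>\<^bsub>PR\<^esub> a"
    by (rule I.a_rcos_self) (simp add: PR_def)
  then have "a \<in> Jid t m +>\<^bsub>PR\<^esub> b" using assms by (simp add: proj_def)
  then obtain h where "h \<in> Jid t m" "a = h + b"
    by (auto simp: a_r_coset_def' PR_def)
  then show ?thesis by simp
qed

lemma proj_J: assumes "p \<in> Jid t m" shows "proj t m p = proj t m 0"
proof -
  interpret I: ideal "Jid t m" PR by (rule J_ideal)
  have "\<zero>\<^bsub>PR\<^esub> \<in> Jid t m" using additive_subgroup.zero_closed[OF ideal.axioms(1)[OF J_ideal]] by simp
  then have "0 \<in> Jid t m" by (simp add: PR_def)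
  then show ?thesis using assms unfolding proj_def
    by (simp add: I.a_rcos_const)
qed

locale SigmaCtx =
  fixes t :: "'d::finite" and m :: real and \<sigma> :: "'d fld set \<Rightarrow> 'd fld"
  assumes dim: "CARD('d) > 2"
    and sec: "\<forall>X\<in>carrier (P0 t m). proj t m (\<sigma> X) = X"
    and hom: "\<sigma> \<in> ring_hom (P0 t m) PR"
    and lin: "\<forall>c p. \<sigma> (proj t m (smult c p)) = smult c (\<sigma> (proj t m p))"
    and lor: "\<forall>L\<in>lorentz t. \<forall>p. \<sigma> (proj t m (lact L p)) = lact L (\<sigma> (proj t m p))"
    and lin1: "\<forall>p\<in>P1. \<sigma> (proj t m p) \<in> P1"
    and mdimh: "\<forall>p D. (\<forall>n\<in>Poly_Mapping.keys p. mdim n \<le> D)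
                 \<longrightarrow> (\<forall>n\<in>Poly_Mapping.keys (\<sigma> (proj t m p)). mdim n \<le> D)"
begin

definition Sg where "Sg p = \<sigma> (proj t m p)"

lemma Sg_hom: "Sg \<in> ring_hom PR PR"
proof -
  interpret I: ideal "Jid t m" PR by (rule J_ideal)
  have "(\<lambda>p. Jid t m +>\<^bsub>PR\<^esub> p) \<in> ring_hom PR (P0 t m)"
    using I.rcos_ring_hom unfolding P0_def Jid_def by simp
  from ring_hom_trans[OF this hom] show ?thesis
    unfolding Sg_def[abs_def] proj_def comp_def .
qed

lemma Sg_add: "Sg (p + q) = Sg p + Sg q"
  using ring_hom_add[OF Sg_hom, of p q] by (simp add: PR_def)

lemma Sg_mult: "Sg (p * q) = Sg p * Sg q"
  using ring_hom_mult[OF Sg_hom, of p q] by (simp add: PR_def)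

lemma Sg_smult: "Sg (smult c p) = smult c (Sg p)"
  using lin by (simp add: Sg_def)

lemma Sg_zero: "Sg 0 = 0"
  using Sg_add[of 0 0] by simp

lemma Sg_uminus: "Sg (- p) = - Sg p"
  using Sg_add[of p "-p"] by (simp add: Sg_zero add_eq_0_iff2)

lemma Sg_diff: "Sg (p - q) = Sg p - Sg q"
  using Sg_add[of p "-q"] by (simp add: Sg_uminus)

lemma Sg_sum: "Sg (\<Sum>i\<in>I. f i) = (\<Sum>i\<in>I. Sg (f i))"
  by (induction I rule: infinite_finite_induct) (auto simp: Sg_add Sg_zero)

lemma Sg_J: "p \<in> Jid t m \<Longrightarrow> Sg p = 0"
  using proj_J[of p t m] Sg_zero by (simp add: Sg_def)

lemma Sg_sec: "Sg p - p \<in> Jid t m"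
proof -
  interpret I: ideal "Jid t m" PR by (rule J_ideal)
  have "proj t m p \<in> carrier (P0 t m)"
    using ring_hom_closed[OF I.rcos_ring_hom, of p]
    unfolding P0_def Jid_def proj_def by (simp add: PR_def)
  then have "proj t m (Sg p) = proj t m p" using sec by (simp add: Sg_def)
  then show ?thesis by (rule proj_eq_diff)
qed

end

definition fd :: "'d mi \<Rightarrow> real \<Rightarrow> 'd fld" where
  "fd a c = Poly_Mapping.single (Poly_Mapping.single a 1) c"

definition co :: "'d fld \<Rightarrow> 'd mi \<Rightarrow> real" where
  "co p a = Poly_Mapping.lookup p (Poly_Mapping.single a 1)"

lemma dphi_fd: "dphi a = fd a 1" by (simp add: dphi_def fd_def)
lemma fd_add: "fd a (c + e) = fd a c + fd a e" by (simp add: fd_def single_add)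
lemma fd_zero[simp]: "fd a 0 = 0" by (simp add: fd_def)
lemma fd_uminus: "fd a (- c) = - fd a c" by (simp add: fd_def single_uminus)
lemma fd_diff: "fd a (c - e) = fd a c - fd a e" by (simp add: fd_def single_diff)
lemma sm_fd: "smult c (fd a e) = fd a (c * e)" by (simp add: smult_def fd_def)
lemma sm_add_left: "smult (c + e) (p::'a::comm_monoid_add \<Rightarrow>\<^sub>0 real) = smult c p + smult e p"
  by (simp add: sm_conv single_add distrib_right)
lemma sm_add_right: "smult c ((p::'a::comm_monoid_add \<Rightarrow>\<^sub>0 real) + q) = smult c p + smult c q"
  by (simp add: sm_conv distrib_left)
lemma sm_zero_left[simp]: "smult 0 (p::'a::comm_monoid_add \<Rightarrow>\<^sub>0 real) = 0" by (simp add: sm_conv)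
lemma sm_zero_right[simp]: "smult c (0::'a::comm_monoid_add \<Rightarrow>\<^sub>0 real) = 0" by (simp add: sm_conv)
lemma sm_one[simp]: "smult 1 (p::'a::comm_monoid_add \<Rightarrow>\<^sub>0 real) = p" by (simp add: sm_conv)
lemma sm_sm: "smult c (smult e (p::'a::comm_monoid_add \<Rightarrow>\<^sub>0 real)) = smult (c * e) p"
  by (simp add: sm_conv mult.assoc[symmetric] mult_single)
lemma sm_sum: "smult c (\<Sum>i\<in>I. (f i::'a::comm_monoid_add \<Rightarrow>\<^sub>0 real)) = (\<Sum>i\<in>I. smult c (f i))"
  by (simp add: sm_conv sum_distrib_left)
lemma sm_diff_right: "smult c ((p::'a::comm_monoid_add \<Rightarrow>\<^sub>0 real) - q) = smult c p - smult c q"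
  by (simp add: sm_conv right_diff_distrib)
lemma sm_diff_left: "smult (c - e) (p::'a::comm_monoid_add \<Rightarrow>\<^sub>0 real) = smult c p - smult e p"
  by (simp add: sm_conv left_diff_distrib single_diff)
lemma sm_uminus_left: "smult (- c) (p::'a::comm_monoid_add \<Rightarrow>\<^sub>0 real) = - smult c p"
  by (simp add: sm_conv single_uminus)
lemma single1_inj: "Poly_Mapping.single a (1::nat) = Poly_Mapping.single b 1 \<longleftrightarrow> a = b"
  by (metis lookup_single_eq lookup_single_not_eq one_neq_zero)

lemma single1_inj'[simp]: "Poly_Mapping.single a (Suc 0) = Poly_Mapping.single b (Suc 0) \<longleftrightarrow> a = b"
  using single1_inj by simp

lemma lookup_smult: "Poly_Mapping.lookup (smult c p) n = c * Poly_Mapping.lookup p n"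
  by (simp add: smult_def map.rep_eq when_def)

lemma co_add: "co (p + q) a = co p a + co q a" by (simp add: co_def lookup_add)
lemma co_diff: "co (p - q) a = co p a - co q a" by (simp add: co_def lookup_minus)
lemma co_fd: "co (fd b c) a = (if a = b then c else 0)"
  by (auto simp: co_def fd_def lookup_single when_def single1_inj)
lemma co_smult: "co (smult c p) a = c * co p a"
  by (simp add: lookup_smult co_def)
lemma co_sum: "co (\<Sum>i\<in>I. f i) a = (\<Sum>i\<in>I. co (f i) a)"
  by (simp add: co_def lookup_sum)

lemma derivation_add: "derivation f (p + q) = derivation f p + derivation f q"
  unfolding derivation_def by (rule sum_keys_add) (auto simp: sm_add_left)

lemma derivation_single: "derivation f (Poly_Mapping.single n c) =
   smult c (\<Sum>v\<in>Poly_Mapping.keys n. smult (real (Poly_Mapping.lookup n v))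
          (monom1 (n - Poly_Mapping.single v 1) * f v))"
  unfolding derivation_def by (rule sum_keys_single) auto

lemma derivation_fd: "derivation f (fd a c) = smult c (f a)"
  by (simp add: fd_def derivation_single monom1_def)

lemma derivation_zero[simp]: "derivation f 0 = 0" by (simp add: derivation_def)

lemma derivation_sum: "derivation f (\<Sum>i\<in>I. g i) = (\<Sum>i\<in>I. derivation f (g i))"
  by (induction I rule: infinite_finite_induct) (auto simp: derivation_add)

definition E1 :: "'d \<Rightarrow> 'd mi" where "E1 \<mu> = miadd mi0 (emi \<mu>)"
definition E2 :: "'d \<Rightarrow> 'd \<Rightarrow> 'd mi" where "E2 \<mu> \<nu> = miadd (miadd mi0 (emi \<nu>)) (emi \<mu>)"

lemma pd_fd: "pd \<mu> (fd a c) = fd (miadd a (emi \<mu>)) c"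
  by (simp add: pd_def derivation_fd dphi_fd sm_fd)

lemma pd_add: "pd \<mu> (p + q) = pd \<mu> p + pd \<mu> q" by (simp add: pd_def derivation_add)
lemma pd_sum: "pd \<mu> (\<Sum>i\<in>I. g i) = (\<Sum>i\<in>I. pd \<mu> (g i))" by (simp add: pd_def derivation_sum)

lemma pd_phi: "pd \<mu> (dphi mi0) = fd (E1 \<mu>) 1" by (simp add: dphi_fd pd_fd E1_def)
lemma pd_pd_phi: "pd \<mu> (pd \<nu> (dphi mi0)) = fd (E2 \<mu> \<nu>) 1"
  by (simp add: dphi_fd pd_fd E2_def)

lemma E2_sym: "E2 \<mu> \<nu> = E2 \<nu> \<mu>" by (auto simp: E2_def miadd_def)

lemma mink_diag: "mink t \<mu> \<nu> = (if \<mu> = \<nu> then mink t \<mu> \<mu> else 0)"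
  by (simp add: mink_def)

lemma KG_eq: fixes t :: "'d::finite" shows "KG t m = (\<Sum>\<mu>\<in>UNIV. fd (E2 \<mu> \<mu>) (mink t \<mu> \<mu>)) + fd mi0 (m ^ 2)"
proof -
  have "\<And>\<mu>. (\<Sum>\<nu>\<in>UNIV. smult (mink t \<mu> \<nu>) (pd \<mu> (pd \<nu> (dphi mi0)))) = fd (E2 \<mu> \<mu>) (mink t \<mu> \<mu>)"
  proof -
    fix \<mu>
    have "(\<Sum>\<nu>\<in>UNIV. smult (mink t \<mu> \<nu>) (pd \<mu> (pd \<nu> (dphi mi0)))) =
          (\<Sum>\<nu>\<in>UNIV. if \<nu> = \<mu> then fd (E2 \<mu> \<mu>) (mink t \<mu> \<mu>) else 0)"
      by (rule sum.cong) (auto simp: pd_pd_phi sm_fd mink_def)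
    then show "?thesis \<mu>" using sum.delta[of UNIV \<mu> "\<lambda>_. fd (E2 \<mu> \<mu>) (mink t \<mu> \<mu>)"] by simp
  qed
  then show ?thesis by (simp add: KG_def dphi_fd sm_fd)
qed

lemma ev_fd: "ev k (fd a c) = c * kpow k a"
  by (simp add: fd_def wt_def)

lemma kpow_add_e: "kpow k (miadd a (emi \<mu>)) = k \<mu> * kpow k a"
proof -
  have "kpow k (miadd a (emi \<mu>)) = (\<Prod>\<rho>\<in>UNIV. k \<rho> ^ a \<rho> * (if \<rho> = \<mu> then k \<rho> else 1))"
    unfolding kpow_def miadd_def emi_def by (rule prod.cong) (auto simp: power_add)
  also have "\<dots> = kpow k a * k \<mu>" by (simp add: prod.distrib kpow_def prod.If_cases)
  finally show ?thesis by simp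
qed

lemma kpow_mi0[simp]: "kpow k mi0 = 1" by (simp add: kpow_def mi0_def)

lemma P1_expand:
  assumes "p \<in> P1"
  obtains A where "finite A" "p = (\<Sum>a\<in>A. fd a (co p a))"
proof -
  let ?A = "{a. Poly_Mapping.single a 1 \<in> Poly_Mapping.keys p}"
  have fin: "finite ?A"
    by (rule finite_vimageI[where h = "\<lambda>a. Poly_Mapping.single a (1::nat)", unfolded vimage_def])
       (auto simp: inj_on_def single1_inj)
  have "p = (\<Sum>a\<in>?A. fd a (co p a))"
  proof (rule poly_mapping_eqI)
    fix n
    show "Poly_Mapping.lookup p n = Poly_Mapping.lookup (\<Sum>a\<in>?A. fd a (co p a)) n"
    proof (cases "n \<in> Poly_Mapping.keys p")
      case True
      then obtain b where b: "n = Poly_Mapping.single b 1" using assms by (auto simp: P1_def)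
      have "Poly_Mapping.lookup (\<Sum>a\<in>?A. fd a (co p a)) n = (\<Sum>a\<in>?A. if a = b then co p a else 0)"
        unfolding lookup_sum by (rule sum.cong) (auto simp: b fd_def lookup_single when_def single1_inj)
      also have "\<dots> = co p b" using True b fin by simp
      finally show ?thesis by (simp add: co_def b)
    next
      case False
      have "Poly_Mapping.lookup (\<Sum>a\<in>?A. fd a (co p a)) n = (\<Sum>a\<in>?A. 0)"
        unfolding lookup_sum by (rule sum.cong) (use False in \<open>auto simp: fd_def lookup_single when_def\<close>)
      then show ?thesis using False by (simp add: in_keys_iff)
    qed
  qed
  then show ?thesis using fin that by blast
qed

lemma P1_add: "p \<in> P1 \<Longrightarrow> q \<in> P1 \<Longrightarrow> p + q \<in> P1"
  using keys_add[of p q] by (auto simp: P1_def)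

lemma P1_fd: "fd a c \<in> P1" by (auto simp: P1_def fd_def)

lemma P1_sum: "(\<And>i. i \<in> I \<Longrightarrow> f i \<in> P1) \<Longrightarrow> (\<Sum>i\<in>I. f i) \<in> P1"
  using keys_sum[of f I] by (auto simp: P1_def)

lemma pd_P1: assumes "p \<in> P1" shows "pd \<mu> p \<in> P1 \<and> ev k (pd \<mu> p) = k \<mu> * ev k p"
proof -
  obtain A where A: "finite A" "p = (\<Sum>a\<in>A. fd a (co p a))" using P1_expand[OF assms] by blast
  have "pd \<mu> p = (\<Sum>a\<in>A. fd (miadd a (emi \<mu>)) (co p a))"
    by (subst A(2)) (simp add: pd_sum pd_fd)
  then show ?thesis
    by (subst (3) A(2)) (simp add: P1_sum P1_fd ev_sum ev_fd kpow_add_e sum_distrib_left algebra_simps)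
qed

lemma KG_P1: fixes t :: "'d::finite" shows "KG t m \<in> P1"
  by (simp add: KG_eq P1_add P1_sum P1_fd)

lemma kpow_E2: "kpow k (E2 \<mu> \<mu>) = k \<mu> ^ 2"
  by (simp add: E2_def kpow_add_e power2_eq_square)

lemma ev_KG: "ev k (KG t m) = (\<Sum>\<mu>\<in>UNIV. mink t \<mu> \<mu> * k \<mu> ^ 2) + m ^ 2"
  by (simp add: KG_eq ev_add ev_sum ev_fd kpow_E2 mult.commute)

lemma ev_J:
  assumes shell: "(\<Sum>\<mu>\<in>UNIV. mink t \<mu> \<mu> * k \<mu> ^ 2) + m ^ 2 = 0"
    and "p \<in> Jid t m"
  shows "ev k p = 0"
proof (rule J_sub_ker[OF _ assms(2)])
  fix q assume "q \<in> KGders t m"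
  then have "q \<in> P1 \<and> ev k q = 0"
  proof induction
    case base then show ?case using KG_P1[of t m] ev_KG[of k t m] shell by simp
  next
    case (step p \<mu>) then show ?case using pd_P1 by auto
  qed
  then show "ev k q = 0" by simp
qed

definition deg :: "'d::finite mi \<Rightarrow> nat" where "deg a = (\<Sum>\<mu>\<in>UNIV. a \<mu>)"

definition LIN2 :: "'d::finite fld set" where
  "LIN2 = {p. \<forall>n\<in>Poly_Mapping.keys p. \<exists>a. n = Poly_Mapping.single a 1 \<and> deg a \<le> 2}"

lemma finite_A2: "finite {a :: 'd::finite mi. deg a \<le> 2}"
proof -
  have "{a :: 'd mi. deg a \<le> 2} \<subseteq> Pi\<^sub>E UNIV (\<lambda>_. {..2})"
  proof
    fix a :: "'d mi" assume "a \<in> {a. deg a \<le> 2}"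
    then have "a \<mu> \<le> 2" for \<mu>
      using member_le_sum[of \<mu> UNIV a] by (simp add: deg_def)
    then show "a \<in> Pi\<^sub>E UNIV (\<lambda>_. {..2})" by (simp add: PiE_UNIV_domain)
  qed
  moreover have "finite (Pi\<^sub>E (UNIV :: 'd set) (\<lambda>_. {..2::nat}))" by (rule finite_PiE) auto
  ultimately show ?thesis by (rule finite_subset)
qed

lemma expand_on:
  assumes "finite A" "\<forall>n\<in>Poly_Mapping.keys p. \<exists>a\<in>A. n = Poly_Mapping.single a 1"
  shows "p = (\<Sum>a\<in>A. fd a (co p a))"
proof (rule poly_mapping_eqI)
  fix n
  show "Poly_Mapping.lookup p n = Poly_Mapping.lookup (\<Sum>a\<in>A. fd a (co p a)) n"
  proof (cases "n \<in> Poly_Mapping.keys p")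
    case True
    then obtain b where b: "b \<in> A" "n = Poly_Mapping.single b 1" using assms by auto
    have "Poly_Mapping.lookup (\<Sum>a\<in>A. fd a (co p a)) n = (\<Sum>a\<in>A. if a = b then co p a else 0)"
      unfolding lookup_sum by (rule sum.cong) (auto simp: b fd_def lookup_single when_def single1_inj)
    also have "\<dots> = co p b" using b assms(1) by simp
    finally show ?thesis by (simp add: co_def b)
  next
    case False
    have "Poly_Mapping.lookup (\<Sum>a\<in>A. fd a (co p a)) n = (\<Sum>a\<in>A. 0)"
      unfolding lookup_sum by (rule sum.cong) (use False in \<open>auto simp: fd_def lookup_single when_def co_def in_keys_iff\<close>)
    then show ?thesis using False by (simp add: in_keys_iff)
  qed
qed

lemma LIN2_expand: "p \<in> LIN2 \<Longrightarrow> p = (\<Sum>a\<in>{a. deg a \<le> 2}. fd a (co p a))"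
  by (rule expand_on[OF finite_A2]) (auto simp: LIN2_def)

lemma ev_LIN2: "p \<in> LIN2 \<Longrightarrow> ev k p = (\<Sum>a\<in>{a. deg a \<le> 2}. co p a * kpow k a)"
  by (subst LIN2_expand) (auto simp: ev_sum ev_fd)

lemma LIN2_add: "p \<in> LIN2 \<Longrightarrow> q \<in> LIN2 \<Longrightarrow> p + q \<in> LIN2"
  using keys_add[of p q] by (auto simp: LIN2_def)
lemma LIN2_uminus: "p \<in> LIN2 \<Longrightarrow> - p \<in> LIN2"
  by (auto simp: LIN2_def)
lemma LIN2_diff: "p \<in> LIN2 \<Longrightarrow> q \<in> LIN2 \<Longrightarrow> p - q \<in> LIN2"
  using LIN2_add[of p "-q"] LIN2_uminus[of q] by simp
lemma LIN2_smult: "p \<in> LIN2 \<Longrightarrow> smult c p \<in> LIN2"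
  by (auto simp: LIN2_def in_keys_iff lookup_smult)
lemma LIN2_fd: "deg a \<le> 2 \<Longrightarrow> fd a c \<in> LIN2" by (auto simp: LIN2_def fd_def)
lemma LIN2_sum: "(\<And>i. i \<in> I \<Longrightarrow> f i \<in> LIN2) \<Longrightarrow> (\<Sum>i\<in>I. f i) \<in> LIN2"
  using keys_sum[of f I] by (auto simp: LIN2_def)

lemma deg_E2: "deg (E2 \<mu> \<nu>) = 2"
  by (simp add: deg_def E2_def miadd_def mi0_def emi_def sum.distrib)
lemma deg_E1: "deg (E1 \<mu>) = 1"
  by (simp add: deg_def E1_def miadd_def mi0_def emi_def)
lemma deg_mi0: "deg mi0 = 0"
  by (simp add: deg_def mi0_def)

lemma KG_LIN2: "KG t m \<in> LIN2"
  by (simp add: KG_eq LIN2_add LIN2_sum LIN2_fd deg_E2 deg_mi0)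

lemma E2_eq_iff: "E2 \<mu> \<mu> = E2 \<nu> \<nu> \<longleftrightarrow> \<mu> = \<nu>"
  by (auto simp: E2_def miadd_def mi0_def emi_def fun_eq_iff split: if_splits)
lemma E2_ne_mi0: "E2 \<mu> \<nu> \<noteq> mi0"
  by (auto simp: E2_def miadd_def mi0_def emi_def fun_eq_iff)

lemma co_KG: fixes t :: "'d::finite" shows "co (KG t m) (E2 \<nu> \<nu>) = mink t \<nu> \<nu>"
proof -
  have "co (KG t m) (E2 \<nu> \<nu>) = (\<Sum>\<mu>\<in>UNIV. if \<nu> = \<mu> then mink t \<mu> \<mu> else 0)"
    by (simp add: KG_eq co_add co_sum co_fd E2_eq_iff E2_ne_mi0)
  then show ?thesis by simp
qed

lemma J_diff: "p \<in> Jid t m \<Longrightarrow> q \<in> Jid t m \<Longrightarrow> p - q \<in> Jid t m"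
proof -
  assume p: "p \<in> Jid t m" and q: "q \<in> Jid t m"
  interpret I: ideal "Jid t m" PR by (rule J_ideal)
  have "(-1) \<otimes>\<^bsub>PR\<^esub> q \<in> Jid t m"
    by (rule I.I_l_closed) (auto simp: q PR_def)
  then have "p \<oplus>\<^bsub>PR\<^esub> ((-1) \<otimes>\<^bsub>PR\<^esub> q) \<in> Jid t m"
    using p by (intro additive_subgroup.a_closed[OF ideal.axioms(1)[OF J_ideal]])
  moreover have "p \<oplus>\<^bsub>PR\<^esub> ((-1) \<otimes>\<^bsub>PR\<^esub> q) = p - q" by (simp add: PR_def)
  ultimately show ?thesis by simp
qed

lemma J_smult: "p \<in> Jid t m \<Longrightarrow> smult c p \<in> Jid t m"
proof -
  assume p: "p \<in> Jid t m"
  interpret I: ideal "Jid t m" PR by (rule J_ideal)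
  have "Poly_Mapping.single 0 c \<otimes>\<^bsub>PR\<^esub> p \<in> Jid t m"
    by (rule I.I_l_closed) (auto simp: p PR_def)
  moreover have "Poly_Mapping.single 0 c \<otimes>\<^bsub>PR\<^esub> p = smult c p" by (simp add: PR_def sm_conv)
  ultimately show ?thesis by simp
qed

lemma KG_J: "KG t m \<in> Jid t m"
  by (rule subsetD[OF KGders_J KGders.base])

definition pt :: "'d \<Rightarrow> 'd \<Rightarrow> 'd \<Rightarrow> real \<Rightarrow> real \<Rightarrow> real \<Rightarrow> 'd \<Rightarrow> real" where
  "pt t i j x y z = (\<lambda>\<rho>. if \<rho> = t then x else if \<rho> = i then y else if \<rho> = j then z else 0)"
definition mk :: "'d \<Rightarrow> 'd \<Rightarrow> 'd \<Rightarrow> nat \<Rightarrow> nat \<Rightarrow> nat \<Rightarrow> 'd mi" where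
  "mk t i j u v w = (\<lambda>\<rho>. if \<rho> = t then u else if \<rho> = i then v else if \<rho> = j then w else 0)"

lemma prod3:
  fixes f :: "'d::finite \<Rightarrow> 'a::comm_monoid_mult"
  assumes "t \<noteq> i" "t \<noteq> j" "i \<noteq> j" "\<And>\<rho>. \<rho> \<notin> {t,i,j} \<Longrightarrow> f \<rho> = 1"
  shows "prod f UNIV = f t * f i * f j"
proof -
  have "prod f UNIV = prod f {t,i,j}" by (rule prod.mono_neutral_right) (use assms in auto)
  then show ?thesis using assms by (simp add: mult.assoc)
qed

lemma sum3:
  fixes f :: "'d::finite \<Rightarrow> 'a::comm_monoid_add"
  assumes "t \<noteq> i" "t \<noteq> j" "i \<noteq> j" "\<And>\<rho>. \<rho> \<notin> {t,i,j} \<Longrightarrow> f \<rho> = 0"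
  shows "sum f UNIV = f t + f i + f j"
proof -
  have "sum f UNIV = sum f {t,i,j}" by (rule sum.mono_neutral_right) (use assms in auto)
  then show ?thesis using assms by (simp add: add.assoc)
qed

lemma kpow_pt_mk:
  fixes t :: "'d::finite"
  assumes "t \<noteq> i" "t \<noteq> j" "i \<noteq> j"
  shows "kpow (pt t i j x y z) (mk t i j u v w) = x ^ u * y ^ v * z ^ w"
  unfolding kpow_def by (subst prod3[OF assms]) (use assms in \<open>auto simp: pt_def mk_def\<close>)

lemma kpow_pt_zero:
  fixes t :: "'d::finite"
  assumes "\<rho> \<notin> {t,i,j}" "a \<rho> \<noteq> 0"
  shows "kpow (pt t i j x y z) a = 0"
  unfolding kpow_def by (rule prod_zero) (use assms in \<open>auto simp: pt_def intro!: bexI[of _ \<rho>]\<close>)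

definition T10 :: "(nat \<times> nat \<times> nat) set" where
  "T10 = {(0,0,0),(1,0,0),(0,1,0),(0,0,1),(2,0,0),(0,2,0),(0,0,2),(1,1,0),(1,0,1),(0,1,1)}"

lemma T10_iff: "(u,v,w) \<in> T10 \<longleftrightarrow> u + v + w \<le> 2"
proof
  assume "u + v + w \<le> 2"
  then have "u = 0 \<or> u = 1 \<or> u = 2" "v = 0 \<or> v = 1 \<or> v = 2" "w = 0 \<or> w = 1 \<or> w = 2" by arith+
  then show "(u,v,w) \<in> T10" using \<open>u + v + w \<le> 2\<close>
    by (elim disjE) (simp_all add: T10_def)
qed (auto simp: T10_def)

lemma deg_mk:
  fixes t :: "'d::finite"
  assumes "t \<noteq> i" "t \<noteq> j" "i \<noteq> j"
  shows "deg (mk t i j u v w) = u + v + w"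
  unfolding deg_def by (subst sum3[OF assms]) (use assms in \<open>auto simp: mk_def\<close>)

lemma ev_pt:
  fixes t :: "'d::finite"
  assumes d: "t \<noteq> i" "t \<noteq> j" "i \<noteq> j" and p: "p \<in> LIN2"
  shows "ev (pt t i j x y z) p = (\<Sum>(u,v,w)\<in>T10. co p (mk t i j u v w) * (x ^ u * y ^ v * z ^ w))"
proof -
  let ?k = "pt t i j x y z"
  let ?B = "{a. deg a \<le> 2 \<and> (\<forall>\<rho>. \<rho> \<notin> {t,i,j} \<longrightarrow> a \<rho> = 0)}"
  have inj: "inj_on (\<lambda>(u,v,w). mk t i j u v w) T10"
  proof (rule inj_onI)
    fix x1 x2 assume e: "(\<lambda>(u,v,w). mk t i j u v w) x1 = (\<lambda>(u,v,w). mk t i j u v w) x2"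
    obtain u v w where x1: "x1 = (u, v, w)" by (cases x1) auto
    obtain u' v' w' where x2: "x2 = (u', v', w')" by (cases x2) auto
    from e have "mk t i j u v w = mk t i j u' v' w'" by (simp add: x1 x2)
    then have "mk t i j u v w t = mk t i j u' v' w' t" "mk t i j u v w i = mk t i j u' v' w' i"
      "mk t i j u v w j = mk t i j u' v' w' j" by auto
    then show "x1 = x2" using d by (auto simp: mk_def x1 x2)
  qed
  have Beq: "?B = (\<lambda>(u,v,w). mk t i j u v w) ` T10"
  proof
    show "?B \<subseteq> (\<lambda>(u,v,w). mk t i j u v w) ` T10"
    proof
      fix a assume a: "a \<in> ?B"
      have "deg a = a t + a i + a j"
        unfolding deg_def by (rule sum3[OF d]) (use a in auto)
      then have "(a t, a i, a j) \<in> T10" using a by (simp add: T10_iff)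
      moreover have "a = mk t i j (a t) (a i) (a j)"
        using a d by (auto simp: mk_def fun_eq_iff)
      ultimately show "a \<in> (\<lambda>(u,v,w). mk t i j u v w) ` T10" by force
    qed
  next
    show "(\<lambda>(u,v,w). mk t i j u v w) ` T10 \<subseteq> ?B"
    proof (rule image_subsetI)
      fix x assume "x \<in> T10"
      moreover obtain u v w where x: "x = (u, v, w)" by (cases x) auto
      ultimately have "(u, v, w) \<in> T10" by simp
      then have "deg (mk t i j u v w) \<le> 2" using d by (simp add: deg_mk T10_iff)
      moreover have "\<forall>\<rho>. \<rho> \<notin> {t,i,j} \<longrightarrow> mk t i j u v w \<rho> = 0" by (simp add: mk_def)
      ultimately show "(\<lambda>(u,v,w). mk t i j u v w) x \<in> ?B" by (simp add: x)
    qed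
  qed
  have "ev ?k p = (\<Sum>a\<in>{a. deg a \<le> 2}. co p a * kpow ?k a)" by (rule ev_LIN2[OF p])
  also have "\<dots> = (\<Sum>a\<in>?B. co p a * kpow ?k a)"
  proof (rule sum.mono_neutral_right)
    show "finite {a :: 'd mi. deg a \<le> 2}" by (rule finite_A2)
    show "?B \<subseteq> {a. deg a \<le> 2}" by blast
    show "\<forall>a\<in>{a. deg a \<le> 2} - ?B. co p a * kpow ?k a = 0"
    proof
      fix a assume "a \<in> {a. deg a \<le> 2} - ?B"
      then obtain \<rho> where r: "\<rho> \<notin> {t,i,j}" "a \<rho> \<noteq> 0" by blast
      show "co p a * kpow ?k a = 0" using kpow_pt_zero[of \<rho> t i j a x y z] r by simp
    qed
  qed
  also have "\<dots> = (\<Sum>a\<in>(\<lambda>(u,v,w). mk t i j u v w) ` T10. co p a * kpow ?k a)"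
    by (simp only: Beq)
  also have "(\<Sum>a\<in>(\<lambda>(u,v,w). mk t i j u v w) ` T10. co p a * kpow ?k a) =
      (\<Sum>x\<in>T10. co p ((\<lambda>(u,v,w). mk t i j u v w) x) * kpow ?k ((\<lambda>(u,v,w). mk t i j u v w) x))"
    by (rule sum.reindex_cong[OF inj refl refl])
  also have "\<dots> = (\<Sum>(u,v,w)\<in>T10. co p (mk t i j u v w) * kpow ?k (mk t i j u v w))"
    by (simp add: case_prod_beta)
  also have "\<dots> = (\<Sum>(u,v,w)\<in>T10. co p (mk t i j u v w) * (x ^ u * y ^ v * z ^ w))"
    by (rule sum.cong) (auto simp: kpow_pt_mk[OF d])
  finally show ?thesis .
qed

lemma shell_pt:
  fixes t :: "'d::finite"
  assumes "t \<noteq> i" "t \<noteq> j" "i \<noteq> j"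
  shows "(\<Sum>\<mu>\<in>UNIV. mink t \<mu> \<mu> * pt t i j x y z \<mu> ^ 2) = x^2 - y^2 - z^2"
  by (subst sum3[OF assms]) (use assms in \<open>auto simp: pt_def mink_def\<close>)

lemma coef_zero:
  fixes t :: "'d::finite"
  assumes d: "t \<noteq> i" "t \<noteq> j" "i \<noteq> j" and r: "r \<in> LIN2" "r \<in> Jid t m"
    and c200: "co r (mk t i j 2 0 0) = 0"
  shows "\<forall>(u,v,w)\<in>T10. co r (mk t i j u v w) = 0"
proof -
  define c where "c u v w = co r (mk t i j u v w)" for u v w
  have E: "c 0 0 0 + c 1 0 0 * x + c 0 1 0 * y + c 0 0 1 * z + c 2 0 0 * x^2 + c 0 2 0 * y^2
      + c 0 0 2 * z^2 + c 1 1 0 * (x*y) + c 1 0 1 * (x*z) + c 0 1 1 * (y*z) = 0"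
    if "x^2 - y^2 - z^2 + m^2 = 0" for x y z
  proof -
    have "ev (pt t i j x y z) r = 0"
      by (rule ev_J[OF _ r(2)]) (simp add: shell_pt[OF d] that)
    then show ?thesis using ev_pt[OF d r(1), of x y z] by (simp add: T10_def c_def algebra_simps)
  qed
  have c2: "c 2 0 0 = 0" using c200 by (simp add: c_def)
  define Y1 where "Y1 = sqrt (1 + m^2)"
  define Y2 where "Y2 = sqrt (4 + m^2)"
  define H where "H = sqrt ((1 + m^2) / 2)"
  have Y1sq: "Y1^2 = 1 + m^2" unfolding Y1_def by (simp add: add_nonneg_nonneg)
  have Y2sq: "Y2^2 = 4 + m^2" unfolding Y2_def by (simp add: add_nonneg_nonneg)
  have Hsq: "H^2 = (1 + m^2) / 2" unfolding H_def by (simp add: add_nonneg_nonneg)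
  have Y1pos: "Y1 > 0" unfolding Y1_def by (simp add: add_pos_nonneg)
  have mpos: "1 + m^2 > 0" by (simp add: add_pos_nonneg)
  have e1: "c 0 0 0 + c 1 0 0 + c 0 1 0 * Y1 + c 0 2 0 * Y1^2 + c 1 1 0 * Y1 = 0"
    using E[of 1 Y1 0] Y1sq c2 by simp
  have e2: "c 0 0 0 - c 1 0 0 + c 0 1 0 * Y1 + c 0 2 0 * Y1^2 - c 1 1 0 * Y1 = 0"
    using E[of "-1" Y1 0] Y1sq c2 by simp
  have e3: "c 0 0 0 + c 1 0 0 - c 0 1 0 * Y1 + c 0 2 0 * Y1^2 - c 1 1 0 * Y1 = 0"
    using E[of 1 "-Y1" 0] Y1sq c2 by simp
  have e4: "c 0 0 0 - c 1 0 0 - c 0 1 0 * Y1 + c 0 2 0 * Y1^2 + c 1 1 0 * Y1 = 0"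
    using E[of "-1" "-Y1" 0] Y1sq c2 by simp
  have c100: "c 1 0 0 = 0" using e1 e2 e3 e4 by linarith
  have "c 0 1 0 * Y1 = 0" using e1 e2 e3 e4 by linarith
  then have c010: "c 0 1 0 = 0" using Y1pos by simp
  have "c 1 1 0 * Y1 = 0" using e1 e2 e3 e4 by linarith
  then have c110: "c 1 1 0 = 0" using Y1pos by simp
  have f1: "c 0 0 0 + c 0 2 0 * (1 + m^2) = 0" using e1 c100 c010 c110 Y1sq by simp
  have f2: "c 0 0 0 + c 0 2 0 * (4 + m^2) = 0"
    using E[of 2 Y2 0] Y2sq c2 c100 c010 c110 by simp
  have c020: "c 0 2 0 = 0" using f1 f2 by (simp add: algebra_simps)
  have c000: "c 0 0 0 = 0" using f1 c020 by simp
  have g1: "c 0 0 1 * Y1 + c 0 0 2 * Y1^2 + c 1 0 1 * Y1 = 0"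
    using E[of 1 0 Y1] Y1sq c2 c000 c100 by simp
  have g2: "c 0 0 1 * Y1 + c 0 0 2 * Y1^2 - c 1 0 1 * Y1 = 0"
    using E[of "-1" 0 Y1] Y1sq c2 c000 c100 by simp
  have g3: "- c 0 0 1 * Y1 + c 0 0 2 * Y1^2 - c 1 0 1 * Y1 = 0"
    using E[of 1 0 "-Y1"] Y1sq c2 c000 c100 by simp
  have "c 0 0 1 * Y1 = 0" using g1 g2 g3 by linarith
  then have c001: "c 0 0 1 = 0" using Y1pos by simp
  have "c 1 0 1 * Y1 = 0" using g1 g2 by linarith
  then have c101: "c 1 0 1 = 0" using Y1pos by simp
  have "c 0 0 2 * Y1^2 = 0" using g1 c001 c101 by simp
  then have c002: "c 0 0 2 = 0" using Y1pos by simp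
  have "c 0 1 1 * H^2 = 0"
    using E[of 1 H H] Hsq c2 c000 c100 c010 c001 c020 c002 c110 c101
    by (simp add: power2_eq_square)
  then have c011: "c 0 1 1 = 0" using Hsq mpos by simp
  show ?thesis
    using c2 c000 c100 c010 c001 c020 c002 c110 c101 c011
    by (simp add: T10_def c_def)
qed

lemma choose_ij:
  fixes t :: "'d::finite" and a :: "'d mi"
  assumes dim: "CARD('d) > 2" and da: "deg a \<le> 2"
  shows "\<exists>i j. i \<noteq> t \<and> j \<noteq> t \<and> i \<noteq> j \<and> (\<forall>\<rho>. \<rho> \<notin> {t,i,j} \<longrightarrow> a \<rho> = 0)"
proof -
  let ?S = "{\<rho>. a \<rho> \<noteq> 0} - {t}"
  have "card {\<rho>. a \<rho> \<noteq> 0} = (\<Sum>\<rho>\<in>{\<rho>. a \<rho> \<noteq> 0}. 1)" by simp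
  also have "\<dots> \<le> (\<Sum>\<rho>\<in>{\<rho>. a \<rho> \<noteq> 0}. a \<rho>)" by (rule sum_mono) auto
  also have "\<dots> \<le> deg a" unfolding deg_def by (rule sum_mono2) auto
  finally have "card {\<rho>. a \<rho> \<noteq> 0} \<le> 2" using da by simp
  moreover have "card ?S \<le> card {\<rho>. a \<rho> \<noteq> 0}" by (rule card_mono) auto
  ultimately have cS: "card ?S \<le> 2" by simp
  have cU: "2 \<le> card (UNIV - {t} :: 'd set)" using dim by (simp add: card_Diff_singleton)
  obtain B where B: "?S \<subseteq> B" "B \<subseteq> UNIV - {t}" "card B = 2"
    using exists_subset_between[OF cS cU] by auto
  then obtain i j where ij: "B = {i,j}" "i \<noteq> j" by (auto simp: card_2_iff)
  show ?thesis
  proof (intro exI conjI allI impI)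
    show "i \<noteq> t" "j \<noteq> t" using B ij by auto
    show "i \<noteq> j" by (rule ij)
    fix \<rho> assume "\<rho> \<notin> {t,i,j}"
    then show "a \<rho> = 0" using B ij by auto
  qed
qed

lemma J_LIN2:
  fixes t :: "'d::finite"
  assumes dim: "CARD('d) > 2" and p: "p \<in> LIN2" "p \<in> Jid t m"
  shows "p = smult (co p (E2 t t)) (KG t m)"
proof -
  define r where "r = p - smult (co p (E2 t t)) (KG t m)"
  have rL: "r \<in> LIN2" unfolding r_def by (intro LIN2_diff LIN2_smult KG_LIN2 p(1))
  have rJ: "r \<in> Jid t m" by (simp add: r_def J_diff J_smult KG_J p)
  have rc: "co r (E2 t t) = 0" by (simp add: r_def co_diff co_smult co_KG mink_def)
  have "co r a = 0" for a
  proof (cases "deg a \<le> 2")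
    case True
    obtain i j where ij: "i \<noteq> t" "j \<noteq> t" "i \<noteq> j" "\<forall>\<rho>. \<rho> \<notin> {t,i,j} \<longrightarrow> a \<rho> = 0"
      using choose_ij[OF dim True] by blast
    have d: "t \<noteq> i" "t \<noteq> j" "i \<noteq> j" using ij by auto
    have "mk t i j 2 0 0 = E2 t t" using d by (auto simp: mk_def E2_def miadd_def mi0_def emi_def fun_eq_iff)
    then have "co r (mk t i j 2 0 0) = 0" using rc by simp
    from coef_zero[OF d rL rJ this] have Z: "\<forall>(u,v,w)\<in>T10. co r (mk t i j u v w) = 0" .
    have "deg a = a t + a i + a j"
      unfolding deg_def by (rule sum3[OF d]) (use ij in auto)
    then have "(a t, a i, a j) \<in> T10" using True by (simp add: T10_iff)
    with Z have "co r (mk t i j (a t) (a i) (a j)) = 0" by auto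
    moreover have "a = mk t i j (a t) (a i) (a j)" using ij by (auto simp: mk_def fun_eq_iff)
    ultimately show ?thesis by simp
  next
    case False
    then have "Poly_Mapping.single a 1 \<notin> Poly_Mapping.keys r" using rL by (auto simp: LIN2_def single1_inj)
    then show ?thesis by (simp add: co_def in_keys_iff)
  qed
  then have "r = 0" using LIN2_expand[OF rL] by simp
  then show ?thesis by (simp add: r_def)
qed

definition blk :: "'d::finite \<Rightarrow> 'd \<Rightarrow> real \<Rightarrow> real \<Rightarrow> real \<Rightarrow> real \<Rightarrow> real^'d^'d" where
  "blk i j a b c e = (\<chi> \<rho> \<sigma>. if \<rho> = i then (if \<sigma> = i then a else if \<sigma> = j then b else 0)
     else if \<rho> = j then (if \<sigma> = i then c else if \<sigma> = j then e else 0)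
     else (if \<rho> = \<sigma> then 1 else 0))"

lemma blk_nth: "blk i j a b c e $ \<rho> $ \<sigma> = (if \<rho> = i then (if \<sigma> = i then a else if \<sigma> = j then b else 0)
     else if \<rho> = j then (if \<sigma> = i then c else if \<sigma> = j then e else 0)
     else (if \<rho> = \<sigma> then 1 else 0))"
  by (simp add: blk_def)

lemma prod2:
  fixes f :: "'d::finite \<Rightarrow> 'a::comm_monoid_mult"
  assumes "i \<noteq> j" "\<And>\<rho>. \<rho> \<notin> {i,j} \<Longrightarrow> f \<rho> = 1"
  shows "prod f UNIV = f i * f j"
proof -
  have "prod f UNIV = prod f {i,j}" by (rule prod.mono_neutral_right) (use assms in auto)
  then show ?thesis using assms by simp
qed

lemma sum2:
  fixes f :: "'d::finite \<Rightarrow> 'a::comm_monoid_add"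
  assumes "i \<noteq> j" "\<And>\<rho>. \<rho> \<notin> {i,j} \<Longrightarrow> f \<rho> = 0"
  shows "sum f UNIV = f i + f j"
proof -
  have "sum f UNIV = sum f {i,j}" by (rule sum.mono_neutral_right) (use assms in auto)
  then show ?thesis using assms by simp
qed

lemma sum_row2:
  fixes F :: "'d::finite \<Rightarrow> real"
  assumes "i \<noteq> j"
  shows "(\<Sum>\<sigma>\<in>UNIV. (if \<sigma> = i then A else if \<sigma> = j then B else 0) * F \<sigma>) = A * F i + B * F j"
  by (subst sum2[OF assms]) (use assms in auto)

lemma sum_row1:
  fixes F :: "'d::finite \<Rightarrow> real"
  shows "(\<Sum>\<sigma>\<in>UNIV. (if \<rho> = \<sigma> then 1 else 0) * F \<sigma>) = F \<rho>"
  by (simp add: if_distrib[where f = "\<lambda>x. x * _"] cong: if_cong)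

lemma det_blk:
  fixes i j :: "'d::finite"
  assumes ij: "i \<noteq> j"
  shows "det (blk i j a b c e) = a * e - b * c"
proof -
  let ?A = "blk i j a b c e"
  let ?P = "{p. p permutes (UNIV::'d set)}"
  let ?T = "Transposition.transpose i j"
  let ?f = "\<lambda>p. of_int (sign p) * (\<Prod>k\<in>UNIV. ?A$k$p k)"
  have Z: "?f p = 0" if "p \<in> ?P - {id, ?T}" for p
  proof -
    from that have pp: "p permutes UNIV" and nid: "p \<noteq> id" and nt: "p \<noteq> ?T" by auto
    have inj: "inj p" using permutes_inj[OF pp] .
    have "\<exists>k. ?A$k$p k = 0"
    proof (rule ccontr)
      assume "\<not> ?thesis"
      then have nz: "?A$k$p k \<noteq> 0" for k by auto
      have fo: "p k = k" if "k \<noteq> i" "k \<noteq> j" for k using nz[of k] that by (auto simp: blk_nth split: if_splits)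
      have pi: "p i = i \<or> p i = j" using nz[of i] by (auto simp: blk_nth split: if_splits)
      have pj: "p j = i \<or> p j = j" using nz[of j] ij by (auto simp: blk_nth split: if_splits)
      have "p i \<noteq> p j" using inj ij by (auto dest: injD)
      then consider "p i = i" "p j = j" | "p i = j" "p j = i" using pi pj by auto
      then show False
      proof cases
        case 1
        have "p = id"
        proof (rule ext)
          fix x show "p x = id x" using fo[of x] 1 by (cases "x = i"; cases "x = j") auto
        qed
        with nid show False by simp
      next
        case 2
        have "p = ?T"
        proof (rule ext)
          fix x show "p x = ?T x" using fo[of x] 2 ij by (cases "x = i"; cases "x = j") auto
        qed
        with nt show False by simp
      qed
    qed
    then show ?thesis by (auto simp: prod_zero)
  qed
  have Tid: "?T \<noteq> id" using ij by (metis id_apply transpose_apply_first)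
  have "det ?A = sum ?f ?P" by (simp add: det_def)
  also have "\<dots> = sum ?f {id, ?T}"
    by (rule sum.mono_neutral_right) (auto simp: permutes_swap_id finite_permutations Z)
  also have "\<dots> = ?f id + ?f ?T" using Tid by (simp add: eq_commute[of id])
  also have "?f id = a * e"
    by (simp, subst prod2[OF ij]) (use ij in \<open>auto simp: blk_nth\<close>)
  also have "?f ?T = - (b * c)"
    by (simp add: sign_swap_id ij, subst prod2[OF ij]) (use ij in \<open>auto simp: blk_nth\<close>)
  finally show ?thesis by simp
qed

lemma blk_metric:
  fixes t i j :: "'d::finite"
  assumes ij: "i \<noteq> j"
    and h1: "a*a*mink t i i + c*c*mink t j j = mink t i i"
    and h2: "a*b*mink t i i + c*e*mink t j j = 0"
    and h3: "b*b*mink t i i + e*e*mink t j j = mink t j j"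
  shows "(\<Sum>\<rho>\<in>UNIV. blk i j a b c e $ \<rho> $ \<mu> * mink t \<rho> \<rho> * blk i j a b c e $ \<rho> $ \<nu>) = mink t \<mu> \<nu>"
proof -
  let ?L = "blk i j a b c e"
  let ?F = "\<lambda>\<rho>. ?L $ \<rho> $ \<mu> * mink t \<rho> \<rho> * ?L $ \<rho> $ \<nu>"
  have split: "sum ?F UNIV = ?F i + ?F j + sum ?F (UNIV - {i,j})"
  proof -
    have "sum ?F UNIV = sum ?F {i,j} + sum ?F (UNIV - {i,j})"
      using sum.subset_diff[of "{i,j}" UNIV ?F] by (simp add: add.commute)
    then show ?thesis using ij by simp
  qed
  have rest: "sum ?F (UNIV - {i,j}) = (if \<mu> = \<nu> \<and> \<mu> \<notin> {i,j} then mink t \<mu> \<mu> else 0)"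
  proof -
    have "sum ?F (UNIV - {i,j}) = (\<Sum>\<rho>\<in>UNIV - {i,j}. if \<rho> = \<mu> then (if \<mu> = \<nu> then mink t \<mu> \<mu> else 0) else 0)"
      by (rule sum.cong) (auto simp: blk_nth)
    also have "\<dots> = (if \<mu> = \<nu> \<and> \<mu> \<notin> {i,j} then mink t \<mu> \<mu> else 0)"
      by (simp add: sum.delta)
    finally show ?thesis .
  qed
  show ?thesis
    unfolding split rest using ij h1 h2 h3
    by (auto simp: blk_nth mink_def algebra_simps)
qed

lemma blk_tt_other: "t \<noteq> i \<Longrightarrow> t \<noteq> j \<Longrightarrow> blk i j a b c e $ t $ t = 1"
  by (simp add: blk_nth)

lemma rot_lorentz:
  fixes t i j :: "'d::finite"
  assumes "i \<noteq> j" "i \<noteq> t" "j \<noteq> t"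
  shows "blk i j 0 1 (-1) 0 \<in> lorentz t"
proof -
  let ?L = "blk i j 0 1 (-1) 0"
  have "\<forall>\<mu> \<nu>. (\<Sum>\<rho>\<in>UNIV. ?L $ \<rho> $ \<mu> * mink t \<rho> \<rho> * ?L $ \<rho> $ \<nu>) = mink t \<mu> \<nu>"
    by (intro allI blk_metric) (use assms in \<open>simp_all add: mink_def\<close>)
  moreover have "det ?L = 1" using assms by (simp add: det_blk)
  moreover have "?L $ t $ t \<ge> 1" using assms by (simp add: blk_nth)
  ultimately show ?thesis by (simp add: lorentz_def)
qed

lemma boost_lorentz:
  fixes t i :: "'d::finite"
  assumes "i \<noteq> t"
  shows "blk t i (5/4) (3/4) (3/4) (5/4) \<in> lorentz t"
proof -
  let ?L = "blk t i (5/4) (3/4) (3/4) (5/4)"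
  have "\<forall>\<mu> \<nu>. (\<Sum>\<rho>\<in>UNIV. ?L $ \<rho> $ \<mu> * mink t \<rho> \<rho> * ?L $ \<rho> $ \<nu>) = mink t \<mu> \<nu>"
    by (intro allI blk_metric) (use assms in \<open>simp_all add: mink_def\<close>)
  moreover have "det ?L = 1" using assms by (simp add: det_blk)
  moreover have "?L $ t $ t \<ge> 1" using assms by (simp add: blk_nth)
  ultimately show ?thesis by (simp add: lorentz_def)
qed

lemma subst_add: "subst f (p + q) = subst f p + subst f q"
  unfolding subst_def by (rule sum_keys_add) (auto simp: sm_add_left)

lemma subst_zero[simp]: "subst f 0 = 0" by (simp add: subst_def)

lemma subst_sum: "subst f (\<Sum>i\<in>I. g i) = (\<Sum>i\<in>I. subst f (g i))"
  by (induction I rule: infinite_finite_induct) (auto simp: subst_add)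

lemma subst_fd: "subst f (fd a c) = smult c (f a)"
  unfolding subst_def fd_def by (subst sum_keys_single) auto

lemma stf_add: "sym_to_field (p + q) = sym_to_field p + sym_to_field q"
  unfolding sym_to_field_def by (rule sum_keys_add) (auto simp: sm_add_left)

lemma stf_zero[simp]: "sym_to_field 0 = 0" by (simp add: sym_to_field_def)

lemma stf_sum: "sym_to_field (\<Sum>i\<in>I. g i) = (\<Sum>i\<in>I. sym_to_field (g i))"
  by (induction I rule: infinite_finite_induct) (auto simp: stf_add)

lemma stf_single: "sym_to_field (Poly_Mapping.single b c) = fd (Poly_Mapping.lookup b) c"
  unfolding sym_to_field_def by (subst sum_keys_single) (auto simp: dphi_fd sm_fd)

lemma fd_sum: "(\<Sum>i\<in>I. fd a (f i)) = fd a (\<Sum>i\<in>I. f i)"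
  by (induction I rule: infinite_finite_induct) (auto simp: fd_add)

lemma lact_add: "lact L (p + q) = lact L p + lact L q" by (simp add: lact_def subst_add)
lemma lact_sum: "lact L (\<Sum>i\<in>I. g i) = (\<Sum>i\<in>I. lact L (g i))" by (simp add: lact_def subst_sum)
lemma lact_fd: "lact L (fd a c) = smult c (sym_to_field (lgen_sym L a))"
  by (simp add: lact_def subst_fd)

lemma lgen_mi0: "lgen_sym L mi0 = 1" by (simp add: lgen_sym_def mi0_def)

lemma lact_phi: fixes L :: "real^'d::finite^'d" shows "lact L (fd mi0 c) = fd mi0 c"
proof -
  have "sym_to_field (1 :: ('d \<Rightarrow>\<^sub>0 nat) \<Rightarrow>\<^sub>0 real) = fd mi0 1"
    using stf_single[of "0 :: 'd \<Rightarrow>\<^sub>0 nat" 1] by (simp add: mi0_def[symmetric] lookup_zero[abs_def])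
  then show ?thesis by (simp add: lact_fd lgen_mi0 sm_fd)
qed

definition Yv :: "real^'d^'d \<Rightarrow> 'd::finite \<Rightarrow> (('d \<Rightarrow>\<^sub>0 nat) \<Rightarrow>\<^sub>0 real)" where
  "Yv L \<mu> = (\<Sum>\<nu>\<in>UNIV. smult (L $ \<mu> $ \<nu>) (monom1 (Poly_Mapping.single \<nu> 1)))"

lemma Yv_eq: "Yv L \<mu> = (\<Sum>\<nu>\<in>UNIV. Poly_Mapping.single (Poly_Mapping.single \<nu> 1) (L $ \<mu> $ \<nu>))"
  by (simp add: Yv_def monom1_def smult_def)

lemma lgen_E2: "lgen_sym L (E2 \<mu> \<nu>) = Yv L \<nu> * Yv L \<mu>"
proof -
  have "lgen_sym L (E2 \<mu> \<nu>) = (\<Prod>\<rho>\<in>UNIV. (if \<rho> = \<nu> then Yv L \<rho> else 1) * (if \<rho> = \<mu> then Yv L \<rho> else 1))"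
    unfolding lgen_sym_def Yv_def[symmetric]
    by (rule prod.cong) (auto simp: E2_def miadd_def mi0_def emi_def power_add)
  also have "\<dots> = Yv L \<nu> * Yv L \<mu>" by (simp add: prod.distrib)
  finally show ?thesis .
qed

lemma lookup_E2: "Poly_Mapping.lookup (Poly_Mapping.single \<sigma> 1 + Poly_Mapping.single \<tau> 1) = E2 \<sigma> \<tau>"
  by (auto simp: fun_eq_iff lookup_add lookup_single when_def E2_def miadd_def mi0_def emi_def)
lemma lookup_E2': "Poly_Mapping.lookup (Poly_Mapping.single \<sigma> (Suc 0) + Poly_Mapping.single \<tau> (Suc 0)) = E2 \<sigma> \<tau>"
  using lookup_E2 by simp

lemma lact_E2: "lact L (fd (E2 \<mu> \<nu>) c) =
   (\<Sum>\<sigma>\<in>UNIV. \<Sum>\<tau>\<in>UNIV. fd (E2 \<sigma> \<tau>) (c * (L $ \<mu> $ \<sigma> * L $ \<nu> $ \<tau>)))"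
proof -
  have "Yv L \<nu> * Yv L \<mu> = (\<Sum>\<tau>\<in>UNIV. \<Sum>\<sigma>\<in>UNIV.
      Poly_Mapping.single (Poly_Mapping.single \<tau> 1 + Poly_Mapping.single \<sigma> 1) (L $ \<nu> $ \<tau> * L $ \<mu> $ \<sigma>))"
    by (simp add: Yv_eq sum_product mult_single)
  then have "sym_to_field (lgen_sym L (E2 \<mu> \<nu>)) =
     (\<Sum>\<tau>\<in>UNIV. \<Sum>\<sigma>\<in>UNIV. fd (E2 \<tau> \<sigma>) (L $ \<nu> $ \<tau> * L $ \<mu> $ \<sigma>))"
    by (simp add: lgen_E2 stf_sum stf_single lookup_E2')
  also have "\<dots> = (\<Sum>\<sigma>\<in>UNIV. \<Sum>\<tau>\<in>UNIV. fd (E2 \<sigma> \<tau>) (L $ \<mu> $ \<sigma> * L $ \<nu> $ \<tau>))"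
    by (subst sum.swap) (simp add: E2_sym mult.commute)
  finally show ?thesis by (simp add: lact_fd sm_sum sm_fd)
qed

lemma lact_KG:
  fixes t :: "'d::finite"
  assumes L: "L \<in> lorentz t"
  shows "lact L (KG t m) = KG t m"
proof -
  have G: "(\<Sum>\<rho>\<in>UNIV. L $ \<rho> $ \<sigma> * mink t \<rho> \<rho> * L $ \<rho> $ \<tau>) = mink t \<sigma> \<tau>" for \<sigma> \<tau>
    using L by (simp add: lorentz_def)
  have "lact L (\<Sum>\<mu>\<in>UNIV. fd (E2 \<mu> \<mu>) (mink t \<mu> \<mu>)) =
     (\<Sum>\<mu>\<in>UNIV. \<Sum>\<sigma>\<in>UNIV. \<Sum>\<tau>\<in>UNIV. fd (E2 \<sigma> \<tau>) (mink t \<mu> \<mu> * (L $ \<mu> $ \<sigma> * L $ \<mu> $ \<tau>)))"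
    by (simp add: lact_sum lact_E2)
  also have "\<dots> = (\<Sum>\<sigma>\<in>UNIV. \<Sum>\<tau>\<in>UNIV. \<Sum>\<mu>\<in>UNIV. fd (E2 \<sigma> \<tau>) (mink t \<mu> \<mu> * (L $ \<mu> $ \<sigma> * L $ \<mu> $ \<tau>)))"
    by (subst sum.swap) (subst (2) sum.swap, rule refl)
  also have "\<dots> = (\<Sum>\<sigma>\<in>UNIV. \<Sum>\<tau>\<in>UNIV. fd (E2 \<sigma> \<tau>) (mink t \<sigma> \<tau>))"
  proof (intro sum.cong refl)
    fix \<sigma> \<tau>
    have "(\<Sum>\<mu>\<in>UNIV. mink t \<mu> \<mu> * (L $ \<mu> $ \<sigma> * L $ \<mu> $ \<tau>)) = mink t \<sigma> \<tau>"
      unfolding G[of \<sigma> \<tau>, symmetric] by (rule sum.cong) (auto simp: algebra_simps)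
    then show "(\<Sum>\<mu>\<in>UNIV. fd (E2 \<sigma> \<tau>) (mink t \<mu> \<mu> * (L $ \<mu> $ \<sigma> * L $ \<mu> $ \<tau>))) = fd (E2 \<sigma> \<tau>) (mink t \<sigma> \<tau>)"
      by (simp add: fd_sum)
  qed
  also have "\<dots> = (\<Sum>\<sigma>\<in>UNIV. fd (E2 \<sigma> \<sigma>) (mink t \<sigma> \<sigma>))"
  proof (rule sum.cong[OF refl])
    fix \<sigma>
    have "(\<Sum>\<tau>\<in>UNIV. fd (E2 \<sigma> \<tau>) (mink t \<sigma> \<tau>)) = (\<Sum>\<tau>\<in>UNIV. if \<sigma> = \<tau> then fd (E2 \<sigma> \<sigma>) (mink t \<sigma> \<sigma>) else 0)"
      by (rule sum.cong) (auto simp: mink_def)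
    then show "(\<Sum>\<tau>\<in>UNIV. fd (E2 \<sigma> \<tau>) (mink t \<sigma> \<tau>)) = fd (E2 \<sigma> \<sigma>) (mink t \<sigma> \<sigma>)" by simp
  qed
  finally show ?thesis by (simp add: KG_eq lact_add lact_phi)
qed

lemma subst_smult: "subst f (smult c p) = smult c (subst f p)"
proof -
  have K: "Poly_Mapping.keys (smult c p) \<subseteq> Poly_Mapping.keys p"
    by (auto simp: in_keys_iff lookup_smult)
  have "subst f (smult c p) = (\<Sum>n\<in>Poly_Mapping.keys p. smult (Poly_Mapping.lookup (smult c p) n)
      (\<Prod>v\<in>Poly_Mapping.keys n. f v ^ Poly_Mapping.lookup n v))"
    unfolding subst_def by (rule sum_keys_sup[OF _ K]) auto
  also have "\<dots> = smult c (subst f p)"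
    by (simp add: subst_def sm_sum lookup_smult sm_sm)
  finally show ?thesis .
qed

lemma lact_smult: "lact L (smult c p) = smult c (lact L p)"
  by (simp add: lact_def subst_smult)

lemma lact_smult_KG:
  fixes t :: "'d::finite"
  assumes L: "L \<in> lorentz t"
  shows "lact L (smult c (KG t m)) = smult c (KG t m)"
proof -
  have "lact L (smult c (KG t m)) = smult c (lact L (KG t m))"
    by (rule lact_smult)
  then show ?thesis using lact_KG[OF L] by simp
qed

lemma mdim_single: "mdim (Poly_Mapping.single b (1::nat)) = (real CARD('d) - 2) / 2 + real (deg (b :: 'd::finite mi))"
  by (simp add: mdim_def mdim_mi_def deg_def)

lemma mdim_single': "mdim (Poly_Mapping.single b (Suc 0)) = (real CARD('d) - 2) / 2 + real (deg (b :: 'd::finite mi))"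
  using mdim_single[of b] by simp

lemma sm_sum_left: "(\<Sum>i\<in>I. smult (f i) p) = smult (\<Sum>i\<in>I. f i) (p :: 'a::comm_monoid_add \<Rightarrow>\<^sub>0 real)"
  by (induction I rule: infinite_finite_induct) (auto simp: sm_add_left)

lemma exists_other:
  assumes "CARD('d::finite) > 2"
  shows "\<exists>j::'d. j \<noteq> t \<and> j \<noteq> i"
proof (rule ccontr)
  assume "\<not> ?thesis"
  then have "UNIV \<subseteq> {t, i}" by auto
  then have "CARD('d) \<le> card {t, i}" by (rule card_mono[rotated]) simp
  also have "\<dots> \<le> 2" by (simp add: card_insert_le_m1)
  finally show False using assms by simp
qed

context SigmaCtx
begin

lemma Sg_fd: "Sg (fd a c) = smult c (Sg (fd a 1))"
  using Sg_smult[of c "fd a 1"] by (simp add: sm_fd)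

lemma Sg_shape:
  assumes "deg a0 \<le> 2"
  shows "Sg (fd a0 1) \<in> LIN2" and "co (Sg (fd a0 1)) b \<noteq> 0 \<Longrightarrow> deg b \<le> deg a0"
proof -
  let ?q = "Sg (fd a0 1)"
  have q1: "?q \<in> P1" using lin1 P1_fd[of a0 1] by (simp add: Sg_def dphi_fd)
  have "\<forall>n\<in>Poly_Mapping.keys (fd a0 1). mdim n \<le> mdim (Poly_Mapping.single a0 1)"
    by (simp add: fd_def)
  then have qm: "\<forall>n\<in>Poly_Mapping.keys ?q. mdim n \<le> mdim (Poly_Mapping.single a0 1)"
    using mdimh by (simp add: Sg_def)
  have K: "\<exists>b. n = Poly_Mapping.single b 1 \<and> deg b \<le> deg a0" if nq: "n \<in> Poly_Mapping.keys ?q" for n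
  proof -
    obtain b where b: "n = Poly_Mapping.single b 1" using q1 nq by (auto simp: P1_def)
    then have "mdim (Poly_Mapping.single b 1) \<le> mdim (Poly_Mapping.single a0 1)" using qm nq by simp
    then have "deg b \<le> deg a0" by (simp add: mdim_single')
    then show ?thesis using b by blast
  qed
  show "?q \<in> LIN2" unfolding LIN2_def using K assms by fastforce
  assume "co ?q b \<noteq> 0"
  then have "Poly_Mapping.single b 1 \<in> Poly_Mapping.keys ?q" by (simp add: co_def in_keys_iff)
  from K[OF this] show "deg b \<le> deg a0" by (auto simp: single1_inj)
qed

definition cc where "cc a0 = co (Sg (fd a0 1)) (E2 t t) - co (fd a0 1) (E2 t t)"

lemma Sg_form:
  assumes "deg a0 \<le> 2"
  shows "Sg (fd a0 1) = fd a0 1 + smult (cc a0) (KG t m)"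
proof -
  let ?R = "Sg (fd a0 1) - fd a0 1"
  have "?R \<in> LIN2" using Sg_shape(1)[OF assms] LIN2_fd[OF assms] by (rule LIN2_diff)
  moreover have "?R \<in> Jid t m" by (rule Sg_sec)
  ultimately have "?R = smult (co ?R (E2 t t)) (KG t m)" using dim by (intro J_LIN2)
  then show ?thesis by (simp add: cc_def co_diff algebra_simps)
qed

lemma cc_low:
  assumes "deg a0 < 2" shows "cc a0 = 0"
proof -
  have "co (Sg (fd a0 1)) (E2 t t) = 0"
    using Sg_shape(2)[of a0 "E2 t t"] assms by (auto simp: deg_E2)
  moreover have "a0 \<noteq> E2 t t" using assms deg_E2[of t t] by auto
  ultimately show ?thesis by (simp add: cc_def co_fd)
qed

lemma stepA: "Sg (fd mi0 1) = fd mi0 1"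
  using Sg_form[of mi0] cc_low[of mi0] by (simp add: deg_mi0)

lemma stepB: "Sg (fd (E1 \<mu>) 1) = fd (E1 \<mu>) 1"
  using Sg_form[of "E1 \<mu>"] cc_low[of "E1 \<mu>"] by (simp add: deg_E1)

abbreviation "c2 \<mu> \<nu> \<equiv> cc (E2 \<mu> \<nu>)"

lemma stepC: "Sg (fd (E2 \<mu> \<nu>) 1) = fd (E2 \<mu> \<nu>) 1 + smult (c2 \<mu> \<nu>) (KG t m)"
  by (rule Sg_form) (simp add: deg_E2)

lemma c2_sym: "c2 \<mu> \<nu> = c2 \<nu> \<mu>" by (simp add: E2_sym)

lemma trace: "(\<Sum>\<mu>\<in>UNIV. mink t \<mu> \<mu> * c2 \<mu> \<mu>) = -1"
proof -
  have "Sg (KG t m) = 0" by (rule Sg_J[OF KG_J])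
  moreover have "Sg (KG t m) = (\<Sum>\<mu>\<in>UNIV. smult (mink t \<mu> \<mu>) (fd (E2 \<mu> \<mu>) 1 + smult (c2 \<mu> \<mu>) (KG t m)))
      + smult (m^2) (fd mi0 1)"
  proof -
    have "Sg (KG t m) = (\<Sum>\<mu>\<in>UNIV. Sg (fd (E2 \<mu> \<mu>) (mink t \<mu> \<mu>))) + Sg (fd mi0 (m^2))"
      by (simp only: KG_eq Sg_add Sg_sum)
    also have "\<dots> = (\<Sum>\<mu>\<in>UNIV. smult (mink t \<mu> \<mu>) (Sg (fd (E2 \<mu> \<mu>) 1))) + smult (m^2) (Sg (fd mi0 1))"
      by (intro arg_cong2[where f="(+)"] sum.cong refl Sg_fd)
    finally show ?thesis by (simp only: stepA stepC)
  qed
  ultimately have eq: "(\<Sum>\<mu>\<in>UNIV. smult (mink t \<mu> \<mu>) (fd (E2 \<mu> \<mu>) 1 + smult (c2 \<mu> \<mu>) (KG t m)))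
      + smult (m^2) (fd mi0 1) = 0" by simp
  have "co ((\<Sum>\<mu>\<in>UNIV. smult (mink t \<mu> \<mu>) (fd (E2 \<mu> \<mu>) 1 + smult (c2 \<mu> \<mu>) (KG t m)))
      + smult (m^2) (fd mi0 1)) (E2 t t) = 0" by (subst eq) (simp add: co_def)
  then have "(\<Sum>\<mu>\<in>UNIV. mink t \<mu> \<mu> * ((if E2 t t = E2 \<mu> \<mu> then 1 else 0) + c2 \<mu> \<mu>)) = 0"
    by (simp add: co_add co_sum co_smult co_fd co_KG E2_ne_mi0 mink_def[of t t t] del: E2_eq_iff)
  moreover have "(\<Sum>\<mu>\<in>UNIV. mink t \<mu> \<mu> * ((if E2 t t = E2 \<mu> \<mu> then 1 else 0) + c2 \<mu> \<mu>)) =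
      (\<Sum>\<mu>\<in>UNIV. (if t = \<mu> then 1 else 0)) + (\<Sum>\<mu>\<in>UNIV. mink t \<mu> \<mu> * c2 \<mu> \<mu>)"
    unfolding sum.distrib[symmetric] by (rule sum.cong) (auto simp: E2_eq_iff mink_def algebra_simps)
  ultimately show ?thesis by simp
qed

end

lemma blk_apply:
  fixes F :: "'d::finite \<Rightarrow> real"
  assumes ij: "i \<noteq> j"
  shows "(\<Sum>\<sigma>\<in>UNIV. blk i j a b c e $ \<rho> $ \<sigma> * F \<sigma>) =
    (if \<rho> = i then a * F i + b * F j else if \<rho> = j then c * F i + e * F j else F \<rho>)"
proof (cases "\<rho> = i")
  case True
  then show ?thesis using sum_row2[OF ij, of a b F] by (simp add: blk_nth)
next
  case False
  note F = this
  show ?thesis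
  proof (cases "\<rho> = j")
    case True
    then show ?thesis using sum_row2[OF ij, of c e F] F by (simp add: blk_nth)
  next
    case False
    then show ?thesis using sum_row1[of \<rho> F] F by (simp add: blk_nth)
  qed
qed

context SigmaCtx
begin

lemma invariance:
  assumes L: "L \<in> lorentz t"
  shows "c2 \<mu> \<nu> = (\<Sum>\<sigma>\<in>UNIV. L$\<mu>$\<sigma> * (\<Sum>\<tau>\<in>UNIV. L$\<nu>$\<tau> * c2 \<sigma> \<tau>))"
proof -
  let ?X = "lact L (fd (E2 \<mu> \<nu>) 1)"
  let ?S = "(\<Sum>\<sigma>\<in>UNIV. \<Sum>\<tau>\<in>UNIV. L$\<mu>$\<sigma> * L$\<nu>$\<tau> * c2 \<sigma> \<tau>)"
  have X: "?X = (\<Sum>\<sigma>\<in>UNIV. \<Sum>\<tau>\<in>UNIV. fd (E2 \<sigma> \<tau>) (L$\<mu>$\<sigma> * L$\<nu>$\<tau>))"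
    using lact_E2[of L \<mu> \<nu> 1] by simp
  have lhs: "Sg ?X = ?X + smult ?S (KG t m)"
  proof -
    have "Sg ?X = (\<Sum>\<sigma>\<in>UNIV. \<Sum>\<tau>\<in>UNIV. Sg (fd (E2 \<sigma> \<tau>) (L$\<mu>$\<sigma> * L$\<nu>$\<tau>)))"
      by (simp only: X Sg_sum)
    also have "\<dots> = (\<Sum>\<sigma>\<in>UNIV. \<Sum>\<tau>\<in>UNIV. smult (L$\<mu>$\<sigma> * L$\<nu>$\<tau>) (fd (E2 \<sigma> \<tau>) 1 + smult (c2 \<sigma> \<tau>) (KG t m)))"
      by (intro sum.cong refl) (subst Sg_fd, simp only: stepC)
    also have "\<dots> = (\<Sum>\<sigma>\<in>UNIV. \<Sum>\<tau>\<in>UNIV. fd (E2 \<sigma> \<tau>) (L$\<mu>$\<sigma> * L$\<nu>$\<tau>)) +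
        (\<Sum>\<sigma>\<in>UNIV. \<Sum>\<tau>\<in>UNIV. smult (L$\<mu>$\<sigma> * L$\<nu>$\<tau> * c2 \<sigma> \<tau>) (KG t m))"
      by (simp add: sm_add_right sm_fd sm_sm sum.distrib)
    also have "\<dots> = ?X + smult ?S (KG t m)" by (simp add: X sm_sum_left)
    finally show ?thesis .
  qed
  have rhs: "lact L (Sg (fd (E2 \<mu> \<nu>) 1)) = ?X + smult (c2 \<mu> \<nu>) (KG t m)"
    by (simp only: stepC lact_add lact_smult_KG[OF L])
  from lor L have "Sg ?X = lact L (Sg (fd (E2 \<mu> \<nu>) 1))" by (simp add: Sg_def)
  then have "smult ?S (KG t m) = smult (c2 \<mu> \<nu>) (KG t m)" using lhs rhs by simp
  then have "co (smult ?S (KG t m)) (E2 t t) = co (smult (c2 \<mu> \<nu>) (KG t m)) (E2 t t)" by simp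
  then have "?S = c2 \<mu> \<nu>" by (simp add: co_smult co_KG mink_def)
  then show ?thesis by (simp add: sum_distrib_left mult.assoc)
qed

lemma c2_ti: assumes "i \<noteq> t" shows "c2 t i = 0"
proof -
  obtain j where j: "j \<noteq> t" "j \<noteq> i" using exists_other[OF dim] by blast
  have ij: "i \<noteq> j" using j by auto
  let ?R = "blk i j 0 1 (-1) 0"
  have R: "?R \<in> lorentz t" using rot_lorentz[OF ij assms j(1)] .
  have "c2 t i = c2 t j"
    using invariance[OF R, of t i] ij assms j by (simp add: blk_apply[OF ij] sum_negf)
  moreover have "c2 t j = - c2 t i"
    using invariance[OF R, of t j] ij assms j by (simp add: blk_apply[OF ij] sum_negf)
  ultimately show ?thesis by simp
qed

lemma c2_ii: assumes "i \<noteq> t" shows "c2 i i = - c2 t t"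
proof -
  have ti: "t \<noteq> i" using assms by auto
  let ?B = "blk t i (5/4) (3/4) (3/4) (5/4)"
  have B: "?B \<in> lorentz t" using boost_lorentz[OF assms] .
  have "c2 t t = 5/4 * (5/4 * c2 t t + 3/4 * c2 t i) + 3/4 * (5/4 * c2 i t + 3/4 * c2 i i)"
    using invariance[OF B, of t t] ti by (simp add: blk_apply[OF ti])
  moreover have "c2 t i = 0" "c2 i t = 0" using c2_ti[OF assms] c2_sym[of i t] by auto
  ultimately show ?thesis by simp
qed

lemma c2_ij: assumes "i \<noteq> t" "j \<noteq> t" "i \<noteq> j" shows "c2 i j = 0"
proof -
  let ?R = "blk i j 0 1 (-1) 0"
  have R: "?R \<in> lorentz t" using rot_lorentz[OF assms(3,1,2)] .
  have "c2 i j = - c2 j i"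
    using invariance[OF R, of i j] assms by (simp add: blk_apply[OF assms(3)] sum_negf)
  then show ?thesis using c2_sym[of i j] by simp
qed

lemma c2_tt: "c2 t t = - 1 / real CARD('d)"
proof -
  have "(\<Sum>\<mu>\<in>UNIV. mink t \<mu> \<mu> * c2 \<mu> \<mu>) = (\<Sum>\<mu>\<in>(UNIV::'d set). c2 t t)"
    by (rule sum.cong) (auto simp: mink_def c2_ii)
  then have "real CARD('d) * c2 t t = -1" using trace by simp
  moreover have "real CARD('d) > 0" using dim by simp
  ultimately show ?thesis by (simp add: field_simps)
qed

lemma c2_val: "c2 \<mu> \<nu> = - (mink t \<mu> \<nu> / real CARD('d))"
proof -
  consider "\<mu> = t" "\<nu> = t" | "\<mu> = t" "\<nu> \<noteq> t" | "\<mu> \<noteq> t" "\<nu> = t" | "\<mu> \<noteq> t" "\<nu> \<noteq> t" "\<mu> = \<nu>"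
    | "\<mu> \<noteq> t" "\<nu> \<noteq> t" "\<mu> \<noteq> \<nu>" by blast
  then show ?thesis
  proof cases
    case 1 then show ?thesis by (simp add: c2_tt mink_def)
  next
    case 2 then show ?thesis by (simp add: c2_ti mink_def)
  next
    case 3 then show ?thesis using c2_ti[of \<mu>] c2_sym[of t \<mu>] by (simp add: mink_def)
  next
    case 4 then show ?thesis by (simp add: c2_ii c2_tt mink_def)
  next
    case 5 then show ?thesis by (simp add: c2_ij mink_def)
  qed
qed

lemma final:
  shows "\<sigma> (proj t m (dphi mi0)) = dphi mi0
    \<and> (\<forall>\<mu>. \<sigma> (proj t m (pd \<mu> (dphi mi0))) = pd \<mu> (dphi mi0))
    \<and> (\<forall>\<mu> \<nu>. \<sigma> (proj t m (pd \<mu> (pd \<nu> (dphi mi0))))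
            = pd \<mu> (pd \<nu> (dphi mi0)) - smult (mink t \<mu> \<nu> / real CARD('d)) (KG t m))"
proof (intro conjI allI)
  show "\<sigma> (proj t m (dphi mi0)) = dphi mi0" using stepA by (simp add: Sg_def dphi_fd)
  fix \<mu>
  show "\<sigma> (proj t m (pd \<mu> (dphi mi0))) = pd \<mu> (dphi mi0)" using stepB[of \<mu>] by (simp add: Sg_def pd_phi)
  fix \<nu>
  show "\<sigma> (proj t m (pd \<mu> (pd \<nu> (dphi mi0)))) = pd \<mu> (pd \<nu> (dphi mi0)) - smult (mink t \<mu> \<nu> / real CARD('d)) (KG t m)"
    using stepC[of \<mu> \<nu>] by (simp add: Sg_def pd_pd_phi c2_val sm_uminus_left)
qed

end

theorem mainTheorem8:
  fixes t :: "'d::finite" and m :: real and \<sigma> :: "'d fld set \<Rightarrow> 'd fld"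
  assumes dim: "CARD('d) > 2"
    and sec: "\<forall>X\<in>carrier (P0 t m). proj t m (\<sigma> X) = X"
    and hom: "\<sigma> \<in> ring_hom (P0 t m) PR"
    and lin: "\<forall>c p. \<sigma> (proj t m (smult c p)) = smult c (\<sigma> (proj t m p))"
    and lor: "\<forall>L\<in>lorentz t. \<forall>p. \<sigma> (proj t m (lact L p)) = lact L (\<sigma> (proj t m p))"
    and P1: "\<forall>p\<in>P1. \<sigma> (proj t m p) \<in> P1"
    and mdim: "\<forall>p D. (\<forall>n\<in>Poly_Mapping.keys p. mdim n \<le> D)
                 \<longrightarrow> (\<forall>n\<in>Poly_Mapping.keys (\<sigma> (proj t m p)). mdim n \<le> D)"
  shows "\<sigma> (proj t m (dphi mi0)) = dphi mi0
    \<and> (\<forall>\<mu>. \<sigma> (proj t m (pd \<mu> (dphi mi0))) = pd \<mu> (dphi mi0))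
    \<and> (\<forall>\<mu> \<nu>. \<sigma> (proj t m (pd \<mu> (pd \<nu> (dphi mi0))))
            = pd \<mu> (pd \<nu> (dphi mi0)) - smult (mink t \<mu> \<nu> / real CARD('d)) (KG t m))"
  proof -
  have S: "SigmaCtx t m \<sigma>" by (rule SigmaCtx.intro[OF dim sec hom lin lor P1 mdim])
  show ?thesis by (rule SigmaCtx.final[OF S])
qed

end
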